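(* (a) Let $\mathcal O=\xi.H$ be an orbit such that $H_\xi$ is compact. Then $\mu_{\mathcal O}(B)=|\{h\in H:\xi.h\in B\}|$ (for Borel $B\subset X$, with $|\cdot|$ left Haar measure of $H$) defines a $\sigma$-finite Borel measure on $X$ with $\mu_{\mathcal O}(X\setminus\mathcal O)=0$, and $\mu_{\mathcal O}$ does not depend on the choice of $\xi\in\mathcal O$. (b) Assume all stabilizers $H_\xi$, $\xi\in X$, are compact, and let $\varphi:X\to[0,\infty)$ be Borel with $\varphi\in L^1(X,\lambda)$ and $0<\int_H\varphi(\xi.h)dh\le1$ for $\lambda$-a.e. $\xi$. Then $$\mu(B)=\int_{X/H}\mu_{\mathcal O}(B)\,d\overline{\lambda_\varphi}(\mathcal O)=\int_X\varphi(\xi)\int_H\mathbf 1_B(\xi.h)\,dh\,d\lambda(\xi)$$ is a well-defined Borel measure on $X$ (and the two expressions agree).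
   Context: $X$ is a standard Borel space; $H$ is a second countable locally compact group with left Haar measure $dh$, acting on $X$ from the right, $(\xi,h)\mapsto\xi.h$, jointly measurably. $\lambda$ is a $\sigma$-finite quasi-invariant Borel measure on $X$ (for each $h$, $B\mapsto\lambda(B.h)$ is equivalent to $\lambda$). $H_\xi=\{h:\xi.h=\xi\}$. $X/H$ is the orbit space with quotient map $q$ and quotient Borel structure. For $\varphi$ as in the claim, $\overline{\lambda_\varphi}$ is the finite measure on $X/H$ given by $\overline{\lambda_\varphi}(U)=\int_{q^{-1}(U)}\varphi\,d\lambda$. *)

theory Defs
  imports "HOL-Analysis.Analysis"
begin

text \<open>Left Haar measure on a (second countable, locally compact Hausdorff) topological
group, written additively (group_add is not assumed commutative): a Borel measure that is
invariant under left translations, finite on compact sets and positive on nonempty open sets.\<close>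
definition left_haar_measure :: "'h::topological_group_add measure \<Rightarrow> bool" where
  "left_haar_measure m \<longleftrightarrow>
     sets m = sets borel \<and>
     (\<forall>g A. A \<in> sets borel \<longrightarrow> emeasure m ((\<lambda>y. g + y) ` A) = emeasure m A) \<and>
     (\<forall>K. compact K \<longrightarrow> emeasure m K < \<infinity>) \<and>
     (\<forall>U. open U \<and> U \<noteq> {} \<longrightarrow> emeasure m U > 0)"

text \<open>Right action xi.h written as act xi h.\<close>
definition right_action :: "('x \<Rightarrow> 'h::group_add \<Rightarrow> 'x) \<Rightarrow> bool" where
  "right_action act \<longleftrightarrow> (\<forall>\<xi>. act \<xi> 0 = \<xi>) \<and> (\<forall>\<xi> g h. act (act \<xi> g) h = act \<xi> (g + h))"

definition orbit :: "('x \<Rightarrow> 'h \<Rightarrow> 'x) \<Rightarrow> 'x \<Rightarrow> 'x set" where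
  "orbit act \<xi> = range (act \<xi>)"

definition stabilizer :: "('x \<Rightarrow> 'h \<Rightarrow> 'x) \<Rightarrow> 'x \<Rightarrow> 'h set" where
  "stabilizer act \<xi> = {h. act \<xi> h = \<xi>}"

definition orbit_measure :: "'h measure \<Rightarrow> ('x::topological_space \<Rightarrow> 'h \<Rightarrow> 'x) \<Rightarrow> 'x \<Rightarrow> 'x measure" where
  "orbit_measure haar act \<xi> = measure_of UNIV (sets borel) (\<lambda>B. emeasure haar {h. act \<xi> h \<in> B})"

definition orbit_measure_of :: "'h measure \<Rightarrow> ('x::topological_space \<Rightarrow> 'h \<Rightarrow> 'x) \<Rightarrow> 'x set \<Rightarrow> 'x measure" where
  "orbit_measure_of haar act Orb = orbit_measure haar act (SOME \<xi>. \<xi> \<in> Orb)"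

definition orbit_space :: "('x::topological_space \<Rightarrow> 'h \<Rightarrow> 'x) \<Rightarrow> 'x set measure" where
  "orbit_space act = sigma (range (orbit act))
      {U. U \<subseteq> range (orbit act) \<and> orbit act -` U \<in> sets borel}"

definition quotient_measure :: "('x::topological_space \<Rightarrow> 'h \<Rightarrow> 'x) \<Rightarrow> 'x measure \<Rightarrow> ('x \<Rightarrow> real) \<Rightarrow> 'x set measure" where
  "quotient_measure act lam \<phi> = measure_of (range (orbit act)) (sets (orbit_space act))
      (\<lambda>U. \<integral>\<^sup>+ \<xi>\<in>(orbit act -` U). ennreal (\<phi> \<xi>) \<partial>lam)"

end

theory Submission
  imports Defs
begin


lemma open_sigma_compact:
  fixes W :: "'h::{t2_space, second_countable_topology} set"
  assumes lc: "locally_compact_space (euclidean :: 'h topology)" and W: "open W"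
  shows "\<exists>S. countable S \<and> (\<forall>K\<in>S. compact K) \<and> \<Union>S = W"
proof -
  obtain B :: "'h set set" where B: "countable B" "topological_basis B"
    using ex_countable_basis by blast
  have hs: "Hausdorff_space (euclidean :: 'h topology)"
    unfolding Hausdorff_space_def disjnt_def using hausdorff by auto
  have nb: "neighbourhood_base_of (\<lambda>C. compactin euclidean C \<and> closedin euclidean C) (euclidean :: 'h topology)"
    using lc locally_compact_space_neighbourhood_base_closedin[of "euclidean :: 'h topology"]
    using hs by blast
  let ?S = "closure ` {b\<in>B. \<exists>K. compact K \<and> b \<subseteq> K \<and> K \<subseteq> W}"
  have "countable ?S" using B(1) by simp
  moreover have "\<forall>K\<in>?S. compact K"
  proof
    fix C assume "C \<in> ?S"
    then obtain b K where "compact K" "b \<subseteq> K" "C = closure b" by auto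
    then have "C = K \<inter> closure b"
      by (simp add: closure_minimal compact_imp_closed inf.absorb2)
    then show "compact C" using \<open>compact K\<close> by (simp add: compact_Int_closed)
  qed
  moreover have "\<Union>?S = W"
  proof
    show "\<Union>?S \<subseteq> W"
    proof clarify
      fix x b K assume "x \<in> closure b" "compact K" "b \<subseteq> K" "K \<subseteq> W"
      then show "x \<in> W"
        using closure_minimal compact_imp_closed by blast
    qed
    show "W \<subseteq> \<Union>?S"
    proof
      fix x assume "x \<in> W"
      then obtain U V where UV: "open U" "compact V" "x \<in> U" "U \<subseteq> V" "V \<subseteq> W"
        using nb W \<open>x \<in> W\<close> unfolding neighbourhood_base_of by (metis compactin_euclidean_iff open_openin)
      then obtain b where "b \<in> B" "x \<in> b" "b \<subseteq> U"
        using B(2) topological_basisE by blast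
      then have "b \<in> {b\<in>B. \<exists>K. compact K \<and> b \<subseteq> K \<and> K \<subseteq> W}" using UV by blast
      then show "x \<in> \<Union>?S" using \<open>x \<in> b\<close> closure_subset by blast
    qed
  qed
  ultimately show ?thesis by blast
qed


lemma finite_union_approx:
  fixes F :: "nat \<Rightarrow> 'a set"
  assumes fin: "finite_measure M" and F: "\<And>i. F i \<in> sets M" and e: "e > 0"
  shows "\<exists>N. measure M (\<Union>i. F i) - measure M (\<Union>i\<le>N. F i) < e"
proof -
  interpret finite_measure M by fact
  have "(\<lambda>n. measure M (\<Union>i\<le>n. F i)) \<longlonglongrightarrow> measure M (\<Union>n. \<Union>i\<le>n. F i)"
  proof (rule finite_Lim_measure_incseq)
    show "range (\<lambda>n. \<Union>i\<le>n. F i) \<subseteq> sets M" using F by auto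
    show "incseq (\<lambda>n. \<Union>i\<le>n. F i)" by (intro monoI UN_mono) auto
  qed
  moreover have "(\<Union>n. \<Union>i\<le>n. F i) = (\<Union>i. F i)" by auto
  ultimately have "(\<lambda>n. measure M (\<Union>i\<le>n. F i)) \<longlonglongrightarrow> measure M (\<Union>i. F i)" by simp
  then obtain N where "\<forall>n\<ge>N. dist (measure M (\<Union>i\<le>n. F i)) (measure M (\<Union>i. F i)) < e"
    using e by (metis LIMSEQ_def)
  then show ?thesis by (auto simp: dist_real_def intro!: exI[of _ N])
qed

lemma regular_closed_open:
  fixes M :: "'h::{t2_space, second_countable_topology} measure"
  assumes lc: "locally_compact_space (euclidean :: 'h topology)"
    and fin: "finite_measure M" and sM: "sets M = sets borel" and A: "A \<in> sets borel"
  shows "\<forall>e>0. \<exists>F U. closed F \<and> open U \<and> F \<subseteq> A \<and> A \<subseteq> U \<and> measure M (U - F) < e"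
proof -
  interpret finite_measure M by fact
  have "A \<in> sigma_sets UNIV {S. open S}" using A sets_borel by blast
  then show ?thesis
  proof induct
    case (Basic A)
    then have "open A" by simp
    then obtain S where S: "countable S" "\<forall>K\<in>S. compact K" "\<Union>S = A"
      using open_sigma_compact[OF lc] by blast
    show ?case
    proof (cases "S = {}")
      case True
      then have "A = {}" using S by simp
      then show ?thesis by (intro allI impI exI[of _ "{}"]) simp
    next
      case False
      define F where "F i = from_nat_into S i" for i
      have FS: "range F = S" using False S(1) by (simp add: F_def range_from_nat_into)
      have Fc: "compact (F i)" for i using FS S(2) by auto
      have Fm: "F i \<in> sets M" for i using Fc by (simp add: sM compact_imp_closed)
      have UA: "(\<Union>i. F i) = A" using FS S(3) by simp
      show ?thesis
      proof (intro allI impI)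
        fix e :: real assume "e > 0"
        then obtain N where N: "measure M (\<Union>i. F i) - measure M (\<Union>i\<le>N. F i) < e"
          using finite_union_approx[OF fin, of F e] Fm by blast
        have cl: "closed (\<Union>i\<le>N. F i)" using Fc by (intro closed_UN) (auto simp: compact_imp_closed)
        have sub: "(\<Union>i\<le>N. F i) \<subseteq> A" using UA by auto
        have "measure M (A - (\<Union>i\<le>N. F i)) = measure M A - measure M (\<Union>i\<le>N. F i)"
          using sub Fm \<open>open A\<close> by (intro finite_measure_Diff) (auto simp: sM)
        then show "\<exists>F U. closed F \<and> open U \<and> F \<subseteq> A \<and> A \<subseteq> U \<and> measure M (U - F) < e"
          using N UA cl sub \<open>open A\<close> by (intro exI[of _ "\<Union>i\<le>N. F i"] exI[of _ A]) auto
      qed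
    qed
  next
    case Empty
    show ?case by (intro allI impI exI[of _ "{}"]) simp
  next
    case (Compl A)
    show ?case
    proof (intro allI impI)
      fix e :: real assume "e > 0"
      with Compl(2) obtain F U where FU: "closed F" "open U" "F \<subseteq> A" "A \<subseteq> U" "measure M (U - F) < e"
        by meson
      have "(UNIV - F) - (UNIV - U) = U - F" by auto
      with FU(5) have m: "measure M ((UNIV - F) - (UNIV - U)) < e" by simp
      have c: "closed (UNIV - U)" using FU(2) by (simp add: closed_Diff)
      have o: "open (UNIV - F)" using FU(1) by (simp add: open_Diff)
      have s1: "UNIV - U \<subseteq> UNIV - A" "UNIV - A \<subseteq> UNIV - F" using FU(3,4) by auto
      show "\<exists>F U. closed F \<and> open U \<and> F \<subseteq> UNIV - A \<and> UNIV - A \<subseteq> U \<and> measure M (U - F) < e"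
        using c o s1 m by blast
    qed
  next
    case (Union A)
    show ?case
    proof (intro allI impI)
      fix e :: real assume e: "e > 0"
      have "\<forall>i. \<exists>F U. closed F \<and> open U \<and> F \<subseteq> A i \<and> A i \<subseteq> U \<and> measure M (U - F) < e / 2 ^ (i + 2)"
        using Union(2) e by auto
      then obtain F U where FU: "\<And>i. closed (F i)" "\<And>i. open (U i)" "\<And>i. F i \<subseteq> A i" "\<And>i. A i \<subseteq> U i"
        "\<And>i. measure M (U i - F i) < e / 2 ^ (i + 2)"
        by metis
      have Fm: "F i \<in> sets M" for i using FU(1) by (simp add: sM)
      have Um: "U i \<in> sets M" for i using FU(2) by (simp add: sM)
      obtain N where N: "measure M (\<Union>i. F i) - measure M (\<Union>i\<le>N. F i) < e / 2"
        using finite_union_approx[OF fin, of F "e/2"] Fm e by auto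
      let ?F = "\<Union>i\<le>N. F i"
      let ?U = "\<Union>i. U i"
      have sub1: "?U - ?F \<subseteq> (\<Union>i. U i - F i) \<union> ((\<Union>i. F i) - ?F)" by blast
      have m1: "?U - ?F \<in> sets M" using Fm Um by auto
      have eqg: "(\<lambda>i. e / 2 ^ (i + 2)) = (\<lambda>i. (e/4) * (1/2::real) ^ i)"
        by (auto simp: power_add field_simps)
      have sm: "summable (\<lambda>i. e / 2 ^ (i + 2))"
        unfolding eqg by (intro summable_mult summable_geometric) simp
      have s2: "(\<Sum>i. e / 2 ^ (i + 2)) = e / 2"
      proof -
        have "(\<Sum>i. (e/4) * (1/2::real) ^ i) = e / 2"
          by (subst suminf_mult) (auto simp: suminf_geometric)
        then show ?thesis unfolding eqg .
      qed
      have smm: "summable (\<lambda>i. measure M (U i - F i))"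
        by (rule summable_comparison_test[OF _ sm]) (use FU(5) in \<open>auto intro!: exI[of _ 0] less_imp_le\<close>)
      have "measure M (\<Union>i. U i - F i) \<le> (\<Sum>i. measure M (U i - F i))"
        using Fm Um smm by (intro finite_measure_subadditive_countably) auto
      also have "\<dots> \<le> (\<Sum>i. e / 2 ^ (i + 2))"
        using smm sm FU(5) by (intro suminf_le) (auto intro: less_imp_le)
      finally have a1: "measure M (\<Union>i. U i - F i) \<le> e / 2" using s2 by simp
      have a2: "measure M ((\<Union>i. F i) - ?F) < e / 2"
        using N Fm by (subst finite_measure_Diff) auto
      have "measure M (?U - ?F) \<le> measure M ((\<Union>i. U i - F i) \<union> ((\<Union>i. F i) - ?F))"
        using sub1 Fm Um by (intro finite_measure_mono) auto
      also have "\<dots> \<le> measure M (\<Union>i. U i - F i) + measure M ((\<Union>i. F i) - ?F)"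
        using Fm Um by (intro measure_Un_le) auto
      finally have "measure M (?U - ?F) < e" using a1 a2 by simp
      moreover have "closed ?F" using FU(1) by auto
      moreover have "open ?U" using FU(2) by auto
      moreover have "?F \<subseteq> (\<Union>i. A i)" using FU(3) by auto
      moreover have "(\<Union>i. A i) \<subseteq> ?U" using FU(4) by auto
      ultimately show "\<exists>F U. closed F \<and> open U \<and> F \<subseteq> (\<Union>i. A i) \<and> (\<Union>i. A i) \<subseteq> U \<and> measure M (U - F) < e"
        by blast
    qed
  qed
qed


lemma lusin:
  fixes M :: "'h::{t2_space, second_countable_topology} measure"
    and f :: "'h \<Rightarrow> 'x::{t2_space, second_countable_topology}"
  assumes lc: "locally_compact_space (euclidean :: 'h topology)"
    and fin: "finite_measure M" and sM: "sets M = sets borel"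
    and f: "f \<in> borel_measurable borel"
    and K0: "compact K0" and null: "measure M (UNIV - K0) = 0" and pos: "measure M UNIV > 0"
  shows "\<exists>C. compact C \<and> C \<subseteq> K0 \<and> measure M C > 0 \<and> continuous_on C f"
proof -
  interpret finite_measure M by fact
  have spM: "space M = UNIV" using sM sets_eq_imp_space_eq by fastforce
  obtain B :: "'x set set" where B: "countable B" "topological_basis B"
    using ex_countable_basis by blast
  have "B \<noteq> {}"
  proof
    assume "B = {}"
    then have "(UNIV :: 'x set) = {}"
      using B(2) unfolding topological_basis_def by (metis Sup_empty open_UNIV subset_empty)
    then show False by simp
  qed
  define b where "b n = from_nat_into B n" for n
  have rb: "range b = B" using \<open>B \<noteq> {}\<close> B(1) by (simp add: b_def range_from_nat_into)
  define A where "A n = f -` b n" for n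
  have Ab: "A n \<in> sets borel" for n
  proof -
    have "open (b n)" using rb B(2) topological_basis_open by blast
    then show ?thesis unfolding A_def using f measurable_sets[OF f, of "b n"] by simp
  qed
  define e where "e = measure M UNIV / 2"
  have e: "e > 0" using pos by (simp add: e_def)
  have "\<forall>n. \<exists>F U. closed F \<and> open U \<and> F \<subseteq> A n \<and> A n \<subseteq> U \<and> measure M (U - F) < e / 2 ^ (n + 1)"
    using regular_closed_open[OF lc fin sM Ab] e by simp
  then obtain F U where FU: "\<And>n. closed (F n)" "\<And>n. open (U n)" "\<And>n. F n \<subseteq> A n" "\<And>n. A n \<subseteq> U n"
        "\<And>n. measure M (U n - F n) < e / 2 ^ (n + 1)"
    by metis
  define C where "C = K0 \<inter> (\<Inter>n. F n \<union> (UNIV - U n))"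
  have clC: "closed (\<Inter>n. F n \<union> (UNIV - U n))"
    using FU(1,2) by (intro closed_INT closed_Un) (auto intro: closed_Diff)
  have cC: "compact C" unfolding C_def using K0 clC by (rule compact_Int_closed)
  have Fm: "F n \<in> sets M" for n using FU(1) by (simp add: sM)
  have Um: "U n \<in> sets M" for n using FU(2) by (simp add: sM)
  have K0m: "K0 \<in> sets M" using K0 by (simp add: sM compact_imp_closed)
  have K0c: "UNIV - K0 \<in> sets M" using K0m spM by (metis sets.compl_sets)
  have Cm: "C \<in> sets M" using cC by (simp add: sM compact_imp_closed)
  have eqg: "(\<lambda>n. e / 2 ^ (n + 1)) = (\<lambda>n. (e/2) * (1/2::real) ^ n)"
    by (auto simp: power_add field_simps)
  have sm: "summable (\<lambda>n. e / 2 ^ (n + 1))"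
    unfolding eqg by (intro summable_mult summable_geometric) simp
  have s2: "(\<Sum>n. e / 2 ^ (n + 1)) = e"
  proof -
    have "(\<Sum>n. (e/2) * (1/2::real) ^ n) = e"
      by (subst suminf_mult) (auto simp: suminf_geometric)
    then show ?thesis unfolding eqg .
  qed
  have smm: "summable (\<lambda>n. measure M (U n - F n))"
    by (rule summable_comparison_test[OF _ sm]) (use FU(5) in \<open>auto intro!: exI[of _ 0] less_imp_le\<close>)
  have "measure M (\<Union>n. U n - F n) \<le> (\<Sum>n. measure M (U n - F n))"
    using Fm Um smm by (intro finite_measure_subadditive_countably) auto
  also have "\<dots> \<le> (\<Sum>n. e / 2 ^ (n + 1))"
    using smm sm FU(5) by (intro suminf_le) (auto intro: less_imp_le)
  finally have a1: "measure M (\<Union>n. U n - F n) \<le> e" using s2 by simp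
  have sub: "UNIV - C \<subseteq> (UNIV - K0) \<union> (\<Union>n. U n - F n)" unfolding C_def by blast
  have "measure M (UNIV - C) \<le> measure M ((UNIV - K0) \<union> (\<Union>n. U n - F n))"
    using sub Fm Um K0c by (intro finite_measure_mono) auto
  also have "\<dots> \<le> measure M (UNIV - K0) + measure M (\<Union>n. U n - F n)"
    using Fm Um K0c by (intro measure_Un_le) auto
  finally have "measure M (UNIV - C) \<le> e" using a1 null by simp
  moreover have "measure M (UNIV - C) = measure M UNIV - measure M C"
    using Cm spM by (metis finite_measure_compl)
  ultimately have Cpos: "measure M C > 0" using e by (simp add: e_def)
  have cont: "continuous_on C f"
    unfolding continuous_on_open_invariant
  proof (intro allI impI)
    fix V :: "'x set" assume "open V"
    then obtain B' where B': "B' \<subseteq> B" "\<Union>B' = V" using B(2) unfolding topological_basis_def by blast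
    define W where "W = (\<Union>n\<in>{n. b n \<in> B'}. U n)"
    have "open W" unfolding W_def using FU(2) by blast
    moreover have "W \<inter> C = f -` V \<inter> C"
    proof
      show "W \<inter> C \<subseteq> f -` V \<inter> C"
      proof
        fix x assume "x \<in> W \<inter> C"
        then obtain n where n: "b n \<in> B'" "x \<in> U n" "x \<in> C" unfolding W_def by blast
        then have "x \<in> F n" unfolding C_def by blast
        then have "f x \<in> b n" using FU(3) A_def by blast
        then show "x \<in> f -` V \<inter> C" using n B' by blast
      qed
      show "f -` V \<inter> C \<subseteq> W \<inter> C"
      proof
        fix x assume x: "x \<in> f -` V \<inter> C"
        then obtain b' where "b' \<in> B'" "f x \<in> b'" using B' by blast
        moreover then obtain n where "b' = b n" using B' rb by blast
        ultimately have "x \<in> A n" "b n \<in> B'" unfolding A_def by auto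
        then show "x \<in> W \<inter> C" using FU(4) x unfolding W_def by blast
      qed
    qed
    ultimately show "\<exists>A. open A \<and> A \<inter> C = f -` V \<inter> C" by blast
  qed
  show ?thesis using cC Cpos cont C_def by blast
qed


lemma haar_basic:
  assumes "left_haar_measure haar"
  shows "sets haar = sets borel" "space haar = UNIV"
  using assms unfolding left_haar_measure_def
  by (auto dest: sets_eq_imp_space_eq)

lemma haar_sf:
  fixes haar :: "'h::{topological_group_add, t2_space, second_countable_topology} measure"
  assumes lc: "locally_compact_space (euclidean :: 'h topology)" and haar: "left_haar_measure haar"
  shows "sigma_finite_measure haar"
proof
  obtain S where S: "countable S" "\<forall>K\<in>S. compact K" "\<Union>S = (UNIV :: 'h set)"
    using open_sigma_compact[OF lc, of UNIV] by auto
  show "\<exists>A. countable A \<and> A \<subseteq> sets haar \<and> \<Union> A = space haar \<and> (\<forall>a\<in>A. emeasure haar a \<noteq> \<infinity>)"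
  proof (intro exI[of _ S] conjI)
    show "countable S" by fact
    show "S \<subseteq> sets haar" using S(2) haar_basic(1)[OF haar] by (auto intro: borel_closed compact_imp_closed)
    show "\<Union>S = space haar" using S(3) haar_basic(2)[OF haar] by simp
    show "\<forall>a\<in>S. emeasure haar a \<noteq> \<infinity>" using S(2) haar unfolding left_haar_measure_def by auto
  qed
qed

lemma act_meas1:
  assumes act_meas: "(\<lambda>p. act (fst p) (snd p)) \<in> borel_measurable (borel \<Otimes>\<^sub>M borel)"
  shows "act \<xi> \<in> borel_measurable borel"
  using measurable_Pair2[OF act_meas, of \<xi>] by simp

lemma orbit_measure_distr:
  assumes haar: "left_haar_measure haar"
    and act_meas: "(\<lambda>p. act (fst p) (snd p)) \<in> borel_measurable (borel \<Otimes>\<^sub>M borel)"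
  shows "orbit_measure haar act \<xi> = distr haar borel (act \<xi>)"
proof -
  have "space haar = UNIV" using haar_basic[OF haar] by simp
  then show ?thesis unfolding orbit_measure_def distr_def space_borel by (simp add: vimage_def)
qed

lemma right_action_simps:
  assumes "right_action act"
  shows "act \<xi> 0 = \<xi>" "act (act \<xi> g) h = act \<xi> (g + h)"
  using assms unfolding right_action_def by auto

lemma orbit_measure_inv:
  fixes act :: "'x::topological_space \<Rightarrow> 'h::topological_group_add \<Rightarrow> 'x"
  assumes haar: "left_haar_measure haar" and act: "right_action act"
    and act_meas: "(\<lambda>p. act (fst p) (snd p)) \<in> borel_measurable (borel \<Otimes>\<^sub>M borel)"
  shows "orbit_measure haar act (act \<xi> g) = orbit_measure haar act \<xi>"
  unfolding orbit_measure_def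
proof (rule measure_of_eq)
  show "sets borel \<subseteq> Pow UNIV" by simp
  fix B assume "B \<in> sigma_sets UNIV (sets (borel :: 'x measure))"
  then have B: "B \<in> sets borel" using sets.sigma_sets_eq[of "borel :: 'x measure"] by simp
  have eq: "{h. act (act \<xi> g) h \<in> B} = (\<lambda>y. - g + y) ` {h. act \<xi> h \<in> B}"
  proof
    show "{h. act (act \<xi> g) h \<in> B} \<subseteq> (\<lambda>y. - g + y) ` {h. act \<xi> h \<in> B}"
    proof
      fix h assume "h \<in> {h. act (act \<xi> g) h \<in> B}"
      then have "act \<xi> (g + h) \<in> B" using right_action_simps[OF act] by simp
      moreover have "h = - g + (g + h)" by (simp add: add.assoc[symmetric])
      ultimately show "h \<in> (\<lambda>y. - g + y) ` {h. act \<xi> h \<in> B}" by blast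
    qed
    show "(\<lambda>y. - g + y) ` {h. act \<xi> h \<in> B} \<subseteq> {h. act (act \<xi> g) h \<in> B}"
      using right_action_simps[OF act] by (auto simp: add.assoc[symmetric])
  qed
  have m: "{h. act \<xi> h \<in> B} \<in> sets borel"
    using measurable_sets[OF act_meas1[OF act_meas, of \<xi>] B] by (simp add: vimage_def)
  show "emeasure haar {h. act (act \<xi> g) h \<in> B} = emeasure haar {h. act \<xi> h \<in> B}"
    unfolding eq using haar m unfolding left_haar_measure_def by blast
qed


lemma borel_UNIV_Diff: "A \<in> sets borel \<Longrightarrow> UNIV - A \<in> sets borel"
  by (metis sets.compl_sets space_borel)

lemma part_a:
  fixes act :: "'x::polish_space \<Rightarrow> 'h::{topological_group_add, t2_space, second_countable_topology} \<Rightarrow> 'x"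
    and haar :: "'h measure"
  assumes lc: "locally_compact_space (euclidean :: 'h topology)"
    and haar: "left_haar_measure haar"
    and act: "right_action act"
    and act_meas: "(\<lambda>p. act (fst p) (snd p)) \<in> borel_measurable (borel \<Otimes>\<^sub>M borel)"
    and stab: "compact (stabilizer act \<xi>)"
  shows "sigma_finite_measure (orbit_measure haar act \<xi>) \<and>
         UNIV - orbit act \<xi> \<in> null_sets (orbit_measure haar act \<xi>)"
proof -
  note hs = haar_basic[OF haar]
  note as = right_action_simps[OF act]
  interpret H: sigma_finite_measure haar using haar_sf[OF lc haar] .
  have hfin: "compact K \<Longrightarrow> emeasure haar K < \<infinity>" for K
    using haar unfolding left_haar_measure_def by blast
  have hinv: "A \<in> sets borel \<Longrightarrow> emeasure haar ((\<lambda>y. g + y) ` A) = emeasure haar A" for g A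
    using haar unfolding left_haar_measure_def by blast
  have hcm: "compact K \<Longrightarrow> K \<in> sets haar" for K
    using hs by (simp add: borel_closed compact_imp_closed)
  define \<psi> where "\<psi> = act \<xi>"
  have psi: "\<psi> \<in> borel_measurable borel" unfolding \<psi>_def by (rule act_meas1[OF act_meas])
  have psih: "\<psi> \<in> borel_measurable haar" using psi measurable_cong_sets[OF hs(1) refl, of "borel :: 'x measure"] by simp
  obtain S where S: "countable S" "\<forall>K\<in>S. compact K" "\<Union>S = (UNIV :: 'h set)"
    using open_sigma_compact[OF lc, of UNIV] by auto
  have Upos: "emeasure haar UNIV > 0" using haar unfolding left_haar_measure_def by simp
  obtain K0 where K0: "K0 \<in> S" "emeasure haar K0 > 0"
  proof (rule ccontr)
    assume "\<not> thesis"
    then have "\<forall>K\<in>S. emeasure haar K = 0" using that by (auto simp: zero_less_iff_neq_zero)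
    then have "(\<Union>K\<in>S. K) \<in> null_sets haar"
      using S hcm by (intro null_sets_UN') auto
    then show False using S(3) Upos by (simp add: null_sets_def)
  qed
  have cK0: "compact K0" using K0 S by auto
  define M0 where "M0 = density haar (indicator K0)"
  have M0e: "X \<in> sets borel \<Longrightarrow> emeasure M0 X = emeasure haar (K0 \<inter> X)" for X
    unfolding M0_def using hcm[OF cK0] hs by (intro emeasure_restricted) auto
  have sM0: "sets M0 = sets borel" unfolding M0_def using hs by simp
  have spM0: "space M0 = UNIV" unfolding M0_def using hs by simp
  have finM0: "finite_measure M0"
  proof
    have "emeasure M0 (space M0) = emeasure haar K0" using M0e[of UNIV] spM0 by simp
    then show "emeasure M0 (space M0) \<noteq> \<infinity>" using hfin[OF cK0] by simp
  qed
  interpret M0: finite_measure M0 by fact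
  have "measure M0 (UNIV - K0) = 0"
    using M0e[of "UNIV - K0"] cK0 by (simp add: measure_def borel_UNIV_Diff borel_closed compact_imp_closed)
  moreover have "measure M0 UNIV > 0"
  proof -
    have "emeasure M0 UNIV = emeasure haar K0" using M0e[of UNIV] by simp
    then have "0 < ennreal (measure M0 UNIV)" using K0(2) M0.emeasure_eq_measure by metis
    then show ?thesis by simp
  qed
  ultimately obtain C where C: "compact C" "C \<subseteq> K0" "measure M0 C > 0" "continuous_on C \<psi>"
    using lusin[OF lc finM0 sM0 psi cK0] by blast
  have Cpos: "emeasure haar C > 0"
  proof -
    have "emeasure haar C = emeasure M0 C" using M0e[of C] C(1,2)
      by (simp add: borel_closed compact_imp_closed Int_absorb1)
    then show ?thesis using C(3) M0.emeasure_eq_measure by (metis ennreal_less_zero_iff)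
  qed
  define T where "T = \<psi> ` C"
  have cT: "compact T" unfolding T_def using C by (intro compact_continuous_image)
  have bT: "T \<in> sets borel" using cT by (simp add: borel_closed compact_imp_closed)
  define Cp where "Cp = \<psi> -` T"
  have bCp: "Cp \<in> sets borel" unfolding Cp_def using measurable_sets[OF psi bT] by simp
  have CCp: "C \<subseteq> Cp" unfolding Cp_def T_def by auto
  have Cppos: "emeasure haar Cp > 0"
    using Cpos emeasure_mono[OF CCp, of haar] bCp hs by simp
  define D where "D = (\<lambda>p. fst p + snd p) ` (stabilizer act \<xi> \<times> C)"
  have cD: "compact D" unfolding D_def
    by (intro compact_continuous_image compact_Times stab C(1) continuous_intros)
  have CpD: "Cp \<subseteq> D"
  proof
    fix h assume "h \<in> Cp"
    then obtain c where c: "c \<in> C" "\<psi> h = \<psi> c" unfolding Cp_def T_def by auto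
    have "act \<xi> (h + - c) = act (act \<xi> h) (- c)" using as by simp
    also have "\<dots> = act (act \<xi> c) (- c)" using c \<psi>_def by simp
    also have "\<dots> = \<xi>" using as by simp
    finally have "h + - c \<in> stabilizer act \<xi>" unfolding stabilizer_def by simp
    moreover have "h = (h + - c) + c" by (simp add: add.assoc)
    ultimately show "h \<in> D" unfolding D_def using c(1) by (auto intro!: image_eqI[of _ _ "(h + - c, c)"])
  qed
  define Q where "Q K = {p :: 'x \<times> 'h. snd p \<in> K \<and> act (fst p) (snd p) \<in> T}" for K
  have Qm: "K \<in> S \<Longrightarrow> Q K \<in> sets (borel \<Otimes>\<^sub>M borel)" for K
  proof -
    assume "K \<in> S"
    then have "K \<in> sets borel" using S by (simp add: borel_closed compact_imp_closed)
    then have "UNIV \<times> K \<in> sets (borel \<Otimes>\<^sub>M (borel :: 'h measure))" by (intro pair_measureI) auto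
    moreover have "(\<lambda>p. act (fst p) (snd p)) -` T \<inter> space (borel \<Otimes>\<^sub>M borel) \<in> sets (borel \<Otimes>\<^sub>M (borel :: 'h measure))"
      using measurable_sets[OF act_meas bT] .
    ultimately have "(UNIV \<times> K) \<inter> ((\<lambda>p. act (fst p) (snd p)) -` T \<inter> space (borel \<Otimes>\<^sub>M borel)) \<in> sets (borel \<Otimes>\<^sub>M (borel :: 'h measure))"
      by blast
    moreover have "(UNIV \<times> K) \<inter> ((\<lambda>p. act (fst p) (snd p)) -` T \<inter> space (borel \<Otimes>\<^sub>M borel)) = Q K"
      unfolding Q_def by (auto simp: space_pair_measure)
    ultimately show ?thesis by simp
  qed
  define SK where "SK K = {x. emeasure haar (Pair x -` Q K) > 0}" for K
  have SKm: "K \<in> S \<Longrightarrow> SK K \<in> sets borel" for K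
  proof -
    assume "K \<in> S"
    have "(\<lambda>x. emeasure haar (Pair x -` Q K)) \<in> borel_measurable (borel :: 'x measure)"
    proof (rule H.measurable_emeasure_Pair)
      show "Q K \<in> sets (borel \<Otimes>\<^sub>M haar)"
        using Qm[OF \<open>K \<in> S\<close>] sets_pair_measure_cong[OF refl hs(1), of "borel :: 'x measure"] by simp
    qed
    from measurable_sets[OF this, of "{0<..}"]
    show ?thesis unfolding SK_def by (simp add: vimage_def)
  qed
  have orb: "orbit act \<xi> = (\<Union>K\<in>S. SK K)"
  proof
    show "(\<Union>K\<in>S. SK K) \<subseteq> orbit act \<xi>"
    proof
      fix x assume "x \<in> (\<Union>K\<in>S. SK K)"
      then obtain K where "emeasure haar (Pair x -` Q K) > 0" unfolding SK_def by auto
      then have "Pair x -` Q K \<noteq> {}" by auto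
      then obtain h where "act x h \<in> T" unfolding Q_def by auto
      then obtain c where c: "act x h = act \<xi> c" unfolding T_def \<psi>_def by auto
      have "x = act x (h + - h)" using as by simp
      also have "\<dots> = act (act x h) (- h)" using as by simp
      also have "\<dots> = act \<xi> (c + - h)" using as c by simp
      finally show "x \<in> orbit act \<xi>" unfolding orbit_def by auto
    qed
    show "orbit act \<xi> \<subseteq> (\<Union>K\<in>S. SK K)"
    proof
      fix x assume "x \<in> orbit act \<xi>"
      then obtain g where g: "x = act \<xi> g" unfolding orbit_def by auto
      define E where "E = (\<lambda>y. - g + y) ` Cp"
      have Eeq: "E = {h. act x h \<in> T}"
      proof
        show "E \<subseteq> {h. act x h \<in> T}"
          using as g unfolding E_def Cp_def \<psi>_def by (auto simp: add.assoc[symmetric])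
        show "{h. act x h \<in> T} \<subseteq> E"
        proof
          fix h assume "h \<in> {h. act x h \<in> T}"
          then have "g + h \<in> Cp" using as g unfolding Cp_def \<psi>_def by simp
          moreover have "h = - g + (g + h)" by (simp add: add.assoc[symmetric])
          ultimately show "h \<in> E" unfolding E_def by blast
        qed
      qed
      have Epos: "emeasure haar E > 0" unfolding E_def using hinv[OF bCp] Cppos by simp
      have Eb: "E \<in> sets borel" unfolding Eeq using measurable_sets[OF act_meas1[OF act_meas, of x] bT]
        by (simp add: vimage_def)
      show "x \<in> (\<Union>K\<in>S. SK K)"
      proof (rule ccontr)
        assume "x \<notin> (\<Union>K\<in>S. SK K)"
        then have z: "\<forall>K\<in>S. emeasure haar (Pair x -` Q K) = 0"
          unfolding SK_def by (auto simp: zero_less_iff_neq_zero)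
        have "Pair x -` Q K = K \<inter> E" for K unfolding Q_def Eeq by auto
        then have "(\<Union>K\<in>S. K \<inter> E) \<in> null_sets haar"
          using z S hcm Eb hs by (intro null_sets_UN') (auto intro!: null_setsI)
        moreover have "(\<Union>K\<in>S. K \<inter> E) = E" using S(3) by auto
        ultimately show False using Epos by (simp add: null_sets_def)
      qed
    qed
  qed
  have orbm: "orbit act \<xi> \<in> sets borel"
    unfolding orb using S(1) SKm by (intro sets.countable_UN') auto
  have om: "orbit_measure haar act \<xi> = distr haar borel \<psi>"
    unfolding \<psi>_def by (rule orbit_measure_distr[OF haar act_meas])
  have cm: "UNIV - orbit act \<xi> \<in> sets borel" using orbm by (simp add: borel_UNIV_Diff)
  have pre: "\<psi> -` (UNIV - orbit act \<xi>) = {}" unfolding \<psi>_def orbit_def by auto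
  have null: "emeasure (orbit_measure haar act \<xi>) (UNIV - orbit act \<xi>) = 0"
    unfolding om using emeasure_distr[OF psih cm] pre by simp
  have nullset: "UNIV - orbit act \<xi> \<in> null_sets (orbit_measure haar act \<xi>)"
    using null cm om by (intro null_setsI) auto
  have SKfin: "K \<in> S \<Longrightarrow> emeasure (orbit_measure haar act \<xi>) (SK K) \<noteq> \<infinity>" for K
  proof -
    assume KS: "K \<in> S"
    define F where "F = (\<lambda>p. fst p + - snd p) ` (D \<times> K)"
    have cF: "compact F" unfolding F_def using cD S KS
      by (intro compact_continuous_image compact_Times continuous_intros) auto
    have sub: "\<psi> -` SK K \<subseteq> F"
    proof
      fix g assume "g \<in> \<psi> -` SK K"
      then have "emeasure haar (Pair (act \<xi> g) -` Q K) > 0" unfolding SK_def \<psi>_def by simp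
      then have "Pair (act \<xi> g) -` Q K \<noteq> {}" by auto
      then obtain h where h: "h \<in> K" "act (act \<xi> g) h \<in> T" unfolding Q_def by auto
      then have "g + h \<in> Cp" using as unfolding Cp_def \<psi>_def by simp
      then have "g + h \<in> D" using CpD by blast
      moreover have "g = (g + h) + - h" by (simp add: add.assoc)
      ultimately show "g \<in> F" unfolding F_def using h(1) by (auto intro!: image_eqI[of _ _ "(g + h, h)"])
    qed
    have "emeasure (orbit_measure haar act \<xi>) (SK K) = emeasure haar (\<psi> -` SK K)"
      unfolding om using emeasure_distr[OF psih SKm[OF KS]] hs by simp
    also have "\<dots> \<le> emeasure haar F" using sub hcm[OF cF] by (rule emeasure_mono)
    also have "\<dots> < \<infinity>" using hfin[OF cF] .
    finally show ?thesis by simp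
  qed
  have sf: "sigma_finite_measure (orbit_measure haar act \<xi>)"
  proof
    have sp: "space (orbit_measure haar act \<xi>) = UNIV" unfolding om by simp
    have ss: "sets (orbit_measure haar act \<xi>) = sets borel" unfolding om by simp
    show "\<exists>A. countable A \<and> A \<subseteq> sets (orbit_measure haar act \<xi>) \<and> \<Union> A = space (orbit_measure haar act \<xi>) \<and>
          (\<forall>a\<in>A. emeasure (orbit_measure haar act \<xi>) a \<noteq> \<infinity>)"
    proof (intro exI[of _ "insert (UNIV - orbit act \<xi>) (SK ` S)"] conjI)
      show "countable (insert (UNIV - orbit act \<xi>) (SK ` S))" using S(1) by simp
      show "insert (UNIV - orbit act \<xi>) (SK ` S) \<subseteq> sets (orbit_measure haar act \<xi>)"
        using ss cm SKm by auto
      show "\<Union> (insert (UNIV - orbit act \<xi>) (SK ` S)) = space (orbit_measure haar act \<xi>)"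
        using sp orb by auto
      show "\<forall>a\<in>insert (UNIV - orbit act \<xi>) (SK ` S). emeasure (orbit_measure haar act \<xi>) a \<noteq> \<infinity>"
        using null SKfin by auto
    qed
  qed
  show ?thesis using sf nullset by blast
qed


lemma orbit_space_facts:
  fixes act :: "'x::topological_space \<Rightarrow> 'h \<Rightarrow> 'x"
  shows "space (orbit_space act) = range (orbit act)"
  "sets (orbit_space act) = sigma_sets (range (orbit act)) {U. U \<subseteq> range (orbit act) \<and> orbit act -` U \<in> sets borel}"
  unfolding orbit_space_def by (auto intro!: space_measure_of sets_measure_of)

lemma quotient_space_facts:
  fixes act :: "'x::topological_space \<Rightarrow> 'h \<Rightarrow> 'x"
  shows "space (quotient_measure act lam \<phi>) = range (orbit act)"
  "sets (quotient_measure act lam \<phi>) = sets (orbit_space act)"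
proof -
  have sub: "sets (orbit_space act) \<subseteq> Pow (range (orbit act))"
  proof -
    have e: "space (orbit_space act) = range (orbit act)" by (rule orbit_space_facts(1))
    show ?thesis using sets.space_closed[of "orbit_space act"] unfolding e .
  qed
  show "space (quotient_measure act lam \<phi>) = range (orbit act)"
    unfolding quotient_measure_def by (simp add: space_measure_of_conv)
  show "sets (quotient_measure act lam \<phi>) = sets (orbit_space act)"
    unfolding quotient_measure_def using sub
    by (simp add: sets_measure_of sets.sigma_sets_eq[of "orbit_space act", unfolded orbit_space_facts(1)])
qed

lemma part_b:
  fixes act :: "'x::polish_space \<Rightarrow> 'h::{topological_group_add, t2_space, second_countable_topology} \<Rightarrow> 'x"
    and haar :: "'h measure" and lam :: "'x measure" and \<phi> :: "'x \<Rightarrow> real"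
  assumes lc: "locally_compact_space (euclidean :: 'h topology)"
    and haar: "left_haar_measure haar"
    and act: "right_action act"
    and act_meas: "(\<lambda>p. act (fst p) (snd p)) \<in> borel_measurable (borel \<Otimes>\<^sub>M borel)"
    and lam_sets: "sets lam = sets borel"
    and phim: "\<phi> \<in> borel_measurable borel"
  defines "m \<equiv> (\<lambda>B. \<integral>\<^sup>+ \<xi>. ennreal (\<phi> \<xi>) * (\<integral>\<^sup>+ h. indicator B (act \<xi> h) \<partial>haar) \<partial>lam)"
  shows "sets (measure_of UNIV (sets borel) m) = sets borel"
    and "B \<in> sets borel \<Longrightarrow>
          (\<lambda>Orb. emeasure (orbit_measure_of haar act Orb) B) \<in> borel_measurable (quotient_measure act lam \<phi>) \<and>
          (\<lambda>\<xi>. ennreal (\<phi> \<xi>) * (\<integral>\<^sup>+ h. indicator B (act \<xi> h) \<partial>haar)) \<in> borel_measurable lam \<and>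
          emeasure (measure_of UNIV (sets borel) m) B =
             (\<integral>\<^sup>+ Orb. emeasure (orbit_measure_of haar act Orb) B \<partial>(quotient_measure act lam \<phi>)) \<and>
          emeasure (measure_of UNIV (sets borel) m) B = m B"
proof -
  note hs = haar_basic[OF haar]
  note as = right_action_simps[OF act]
  interpret H: sigma_finite_measure haar using haar_sf[OF lc haar] .
  have lsp: "space lam = UNIV" using lam_sets sets_eq_imp_space_eq by fastforce
  show ss: "sets (measure_of UNIV (sets borel) m) = sets borel"
    using sets.sigma_sets_eq[of "borel :: 'x measure"] by (simp add: sets_measure_of_conv)
  define F where "F B \<xi> = (\<integral>\<^sup>+ h. indicator B (act \<xi> h) \<partial>haar)" for B \<xi>
  have Fm: "B \<in> sets borel \<Longrightarrow> F B \<in> borel_measurable borel" for B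
  proof -
    assume B: "B \<in> sets borel"
    have "(\<lambda>p. indicator B (act (fst p) (snd p)) :: ennreal) \<in> borel_measurable (borel \<Otimes>\<^sub>M borel)"
      using measurable_compose[OF act_meas borel_measurable_indicator[OF B]] by (simp add: comp_def)
    then have "(\<lambda>p. indicator B (act (fst p) (snd p)) :: ennreal) \<in> borel_measurable (borel \<Otimes>\<^sub>M haar)"
      using measurable_cong_sets[OF sets_pair_measure_cong[OF refl hs(1), of "borel :: 'x measure"] refl,
          of "borel :: ennreal measure"] by simp
    then show ?thesis unfolding F_def
      using H.borel_measurable_nn_integral[of "\<lambda>x h. indicator B (act x h) :: ennreal" borel] by (simp add: case_prod_beta')
  qed
  have Fe: "B \<in> sets borel \<Longrightarrow> F B \<xi> = emeasure haar {h. act \<xi> h \<in> B}" for B \<xi>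
  proof -
    assume B: "B \<in> sets borel"
    have "{h. act \<xi> h \<in> B} \<in> sets haar"
      using measurable_sets[OF act_meas1[OF act_meas, of \<xi>] B] hs by (simp add: vimage_def)
    moreover have "(\<lambda>h. indicator B (act \<xi> h) :: ennreal) = indicator {h. act \<xi> h \<in> B}"
      by (auto simp: indicator_def)
    ultimately show ?thesis unfolding F_def by simp
  qed
  have omo: "orbit_measure_of haar act (orbit act \<xi>) = orbit_measure haar act \<xi>" for \<xi>
  proof -
    have "\<xi> \<in> orbit act \<xi>" unfolding orbit_def using as(1)[of \<xi>] by (metis rangeI)
    then have "(SOME \<zeta>. \<zeta> \<in> orbit act \<xi>) \<in> orbit act \<xi>" by (rule someI)
    then obtain g where "(SOME \<zeta>. \<zeta> \<in> orbit act \<xi>) = act \<xi> g" unfolding orbit_def by auto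
    then show ?thesis unfolding orbit_measure_of_def using orbit_measure_inv[OF haar act act_meas] by simp
  qed
  have omF: "B \<in> sets borel \<Longrightarrow> emeasure (orbit_measure_of haar act (orbit act \<xi>)) B = F B \<xi>" for B \<xi>
  proof -
    assume B: "B \<in> sets borel"
    have psih: "act \<xi> \<in> measurable haar borel"
      using act_meas1[OF act_meas, of \<xi>] measurable_cong_sets[OF hs(1) refl, of "borel :: 'x measure"] by simp
    show ?thesis unfolding omo orbit_measure_distr[OF haar act_meas] Fe[OF B]
      using emeasure_distr[OF psih B] hs by (simp add: vimage_def)
  qed
  have phil: "(\<lambda>\<xi>. ennreal (\<phi> \<xi>)) \<in> borel_measurable lam"
    using phim measurable_cong_sets[OF lam_sets refl, of "borel :: ennreal measure"] by simp
  have Fl: "B \<in> sets borel \<Longrightarrow> F B \<in> borel_measurable lam" for B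
    using Fm measurable_cong_sets[OF lam_sets refl, of "borel :: ennreal measure"] by simp
  have pFl: "B \<in> sets borel \<Longrightarrow> (\<lambda>\<xi>. ennreal (\<phi> \<xi>) * F B \<xi>) \<in> borel_measurable lam" for B
    by (rule borel_measurable_times_ennreal[OF phil Fl])
  have mF: "m B = (\<integral>\<^sup>+ \<xi>. ennreal (\<phi> \<xi>) * F B \<xi> \<partial>lam)" for B
    unfolding m_def F_def ..
  have indh: "B \<in> sets borel \<Longrightarrow> (\<lambda>h. indicator B (act \<xi> h) :: ennreal) \<in> borel_measurable haar" for B \<xi>
  proof -
    assume B: "B \<in> sets borel"
    have psih: "act \<xi> \<in> measurable haar borel"
      using act_meas1[OF act_meas, of \<xi>] measurable_cong_sets[OF hs(1) refl, of "borel :: 'x measure"] by simp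
    show ?thesis using measurable_compose[OF psih borel_measurable_indicator[OF B]] by (simp add: comp_def)
  qed
  have ca: "countably_additive (sets borel) m"
    unfolding countably_additive_def
  proof (intro allI impI)
    fix A :: "nat \<Rightarrow> 'x set"
    assume A: "range A \<subseteq> sets borel" "disjoint_family A"
    have Ai: "A i \<in> sets borel" for i using A(1) by auto
    have FU: "F (\<Union>i. A i) \<xi> = (\<Sum>i. F (A i) \<xi>)" for \<xi>
    proof -
      have "(\<Sum>i. F (A i) \<xi>) = (\<integral>\<^sup>+ h. (\<Sum>i. indicator (A i) (act \<xi> h)) \<partial>haar)"
        unfolding F_def using indh[OF Ai] by (subst nn_integral_suminf) auto
      also have "\<dots> = F (\<Union>i. A i) \<xi>"
        unfolding F_def using suminf_indicator[OF A(2)] by simp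
      finally show ?thesis ..
    qed
    have "(\<Sum>i. m (A i)) = (\<integral>\<^sup>+ \<xi>. (\<Sum>i. ennreal (\<phi> \<xi>) * F (A i) \<xi>) \<partial>lam)"
      unfolding mF using pFl[OF Ai] by (subst nn_integral_suminf) auto
    also have "\<dots> = m (\<Union>i. A i)"
      unfolding mF FU by simp
    finally show "(\<Sum>i. m (A i)) = m (\<Union> (range A))" by simp
  qed
  have pos: "positive (sets borel) m"
    unfolding positive_def m_def by simp
  have sa: "sigma_algebra UNIV (sets (borel :: 'x measure))"
    using sets.sigma_algebra_axioms[of "borel :: 'x measure"] by simp
  have sub: "sets (orbit_space act) \<subseteq> Pow (range (orbit act))"
  proof -
    have e: "space (orbit_space act) = range (orbit act)" by (rule orbit_space_facts(1))
    show ?thesis using sets.space_closed[of "orbit_space act"] unfolding e .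
  qed
  have orbm: "orbit act \<in> measurable lam (orbit_space act)"
    unfolding orbit_space_def
    by (rule measurable_measure_of) (auto simp: lsp lam_sets)
  have qeq: "quotient_measure act lam \<phi> = distr (density lam (\<lambda>\<xi>. ennreal (\<phi> \<xi>))) (orbit_space act) (orbit act)"
    unfolding quotient_measure_def distr_def orbit_space_facts(1)
  proof (rule measure_of_eq[OF sub])
    fix a assume "a \<in> sigma_sets (range (orbit act)) (sets (orbit_space act))"
    then have a: "a \<in> sets (orbit_space act)"
      using sets.sigma_sets_eq[of "orbit_space act", unfolded orbit_space_facts(1)] by simp
    have "orbit act -` a \<inter> space lam \<in> sets lam" using measurable_sets[OF orbm a] .
    then have "orbit act -` a \<in> sets lam" using lsp by simp
    then show "(\<integral>\<^sup>+ \<xi>\<in>orbit act -` a. ennreal (\<phi> \<xi>) \<partial>lam) =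
        emeasure (density lam (\<lambda>\<xi>. ennreal (\<phi> \<xi>))) (orbit act -` a \<inter> space (density lam (\<lambda>\<xi>. ennreal (\<phi> \<xi>))))"
      using emeasure_density[OF phil] lsp by simp
  qed
  show "(\<lambda>Orb. emeasure (orbit_measure_of haar act Orb) B) \<in> borel_measurable (quotient_measure act lam \<phi>) \<and>
          (\<lambda>\<xi>. ennreal (\<phi> \<xi>) * (\<integral>\<^sup>+ h. indicator B (act \<xi> h) \<partial>haar)) \<in> borel_measurable lam \<and>
          emeasure (measure_of UNIV (sets borel) m) B =
             (\<integral>\<^sup>+ Orb. emeasure (orbit_measure_of haar act Orb) B \<partial>(quotient_measure act lam \<phi>)) \<and>
          emeasure (measure_of UNIV (sets borel) m) B = m B"
    if B: "B \<in> sets borel" for B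
  proof -
    define f where "f Orb = emeasure (orbit_measure_of haar act Orb) B" for Orb
    have fo: "f (orbit act \<xi>) = F B \<xi>" for \<xi> unfolding f_def using omF[OF B] .
    have meas1: "f \<in> borel_measurable (quotient_measure act lam \<phi>)"
    proof (rule borel_measurableI)
      fix V :: "ennreal set" assume V: "open V"
      let ?U = "f -` V \<inter> range (orbit act)"
      have "orbit act -` ?U = F B -` V" using fo by auto
      moreover have "F B -` V \<in> sets borel"
        using measurable_sets[OF Fm[OF B] borel_open[OF V]] by simp
      ultimately have "?U \<in> {U. U \<subseteq> range (orbit act) \<and> orbit act -` U \<in> sets borel}" by simp
      then have "?U \<in> sets (orbit_space act)" unfolding orbit_space_facts(2) by (rule sigma_sets.Basic)
      then show "f -` V \<inter> space (quotient_measure act lam \<phi>) \<in> sets (quotient_measure act lam \<phi>)"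
        unfolding quotient_space_facts .
    qed
    have em: "emeasure (measure_of UNIV (sets borel) m) B = m B"
      by (rule emeasure_measure_of_sigma[OF sa pos ca B])
    have "(\<integral>\<^sup>+ Orb. f Orb \<partial>(quotient_measure act lam \<phi>)) = (\<integral>\<^sup>+ \<xi>. f (orbit act \<xi>) \<partial>density lam (\<lambda>\<xi>. ennreal (\<phi> \<xi>)))"
    proof -
      have od: "orbit act \<in> measurable (density lam (\<lambda>\<xi>. ennreal (\<phi> \<xi>))) (orbit_space act)"
        using orbm by simp
      show ?thesis using nn_integral_distr[OF od, of f] meas1 unfolding qeq by simp
    qed
    also have "\<dots> = (\<integral>\<^sup>+ \<xi>. F B \<xi> \<partial>density lam (\<lambda>\<xi>. ennreal (\<phi> \<xi>)))" unfolding fo ..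
    also have "\<dots> = m B" unfolding mF using nn_integral_density[OF phil Fl[OF B]] .
    finally show ?thesis using meas1 pFl[OF B] em unfolding f_def F_def by simp
  qed
qed


theorem mainTheorem9:
  fixes act :: "'x::polish_space \<Rightarrow> 'h::{topological_group_add, t2_space, second_countable_topology} \<Rightarrow> 'x"
    and haar :: "'h measure"
    and lam :: "'x measure"
  assumes lc: "locally_compact_space (euclidean :: 'h topology)"
    and haar: "left_haar_measure haar"
    and act: "right_action act"
    and act_meas: "(\<lambda>p. act (fst p) (snd p)) \<in> borel_measurable (borel \<Otimes>\<^sub>M borel)"
    and lam_sf: "sigma_finite_measure lam"
    and lam_sets: "sets lam = sets borel"
    and quasi_inv: "\<forall>h B. B \<in> sets borel \<longrightarrow>
                      (emeasure lam ((\<lambda>\<xi>. act \<xi> h) ` B) = 0 \<longleftrightarrow> emeasure lam B = 0)"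
  shows
    "(\<forall>\<xi>. compact (stabilizer act \<xi>) \<longrightarrow>
        sets (orbit_measure haar act \<xi>) = sets borel \<and>
        (\<forall>B \<in> sets borel. emeasure (orbit_measure haar act \<xi>) B = emeasure haar {h. act \<xi> h \<in> B}) \<and>
        sigma_finite_measure (orbit_measure haar act \<xi>) \<and>
        UNIV - orbit act \<xi> \<in> null_sets (orbit_measure haar act \<xi>) \<and>
        (\<forall>\<zeta> \<in> orbit act \<xi>. orbit_measure haar act \<zeta> = orbit_measure haar act \<xi>))
     \<and>
     ((\<forall>\<xi>. compact (stabilizer act \<xi>)) \<longrightarrow>
       (\<forall>\<phi> :: 'x \<Rightarrow> real.
          \<phi> \<in> borel_measurable borel \<and> (\<forall>\<xi>. 0 \<le> \<phi> \<xi>) \<and> integrable lam \<phi> \<and>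
          (AE \<xi> in lam. 0 < (\<integral>\<^sup>+ h. ennreal (\<phi> (act \<xi> h)) \<partial>haar) \<and>
                         (\<integral>\<^sup>+ h. ennreal (\<phi> (act \<xi> h)) \<partial>haar) \<le> 1)
          \<longrightarrow>
          (let \<mu> = measure_of UNIV (sets borel)
                     (\<lambda>B. \<integral>\<^sup>+ \<xi>. ennreal (\<phi> \<xi>) * (\<integral>\<^sup>+ h. indicator B (act \<xi> h) \<partial>haar) \<partial>lam)
           in sets \<mu> = sets borel \<and>
              (\<forall>B \<in> sets borel.
                 (\<lambda>Orb. emeasure (orbit_measure_of haar act Orb) B)
                    \<in> borel_measurable (quotient_measure act lam \<phi>) \<and>
                 (\<lambda>\<xi>. ennreal (\<phi> \<xi>) * (\<integral>\<^sup>+ h. indicator B (act \<xi> h) \<partial>haar))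
                    \<in> borel_measurable lam \<and>
                 emeasure \<mu> B = (\<integral>\<^sup>+ Orb. emeasure (orbit_measure_of haar act Orb) B
                                     \<partial>(quotient_measure act lam \<phi>)) \<and>
                 emeasure \<mu> B = (\<integral>\<^sup>+ \<xi>. ennreal (\<phi> \<xi>) * (\<integral>\<^sup>+ h. indicator B (act \<xi> h) \<partial>haar) \<partial>lam)))))"
proof -
  note hs = haar_basic[OF haar]
  have A: "compact (stabilizer act \<xi>) \<longrightarrow>
        sets (orbit_measure haar act \<xi>) = sets borel \<and>
        (\<forall>B \<in> sets borel. emeasure (orbit_measure haar act \<xi>) B = emeasure haar {h. act \<xi> h \<in> B}) \<and>
        sigma_finite_measure (orbit_measure haar act \<xi>) \<and>
        UNIV - orbit act \<xi> \<in> null_sets (orbit_measure haar act \<xi>) \<and>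
        (\<forall>\<zeta> \<in> orbit act \<xi>. orbit_measure haar act \<zeta> = orbit_measure haar act \<xi>)" for \<xi>
  proof
    assume stab: "compact (stabilizer act \<xi>)"
    have om: "orbit_measure haar act \<xi> = distr haar borel (act \<xi>)"
      by (rule orbit_measure_distr[OF haar act_meas])
    have psih: "act \<xi> \<in> measurable haar borel"
      using act_meas1[OF act_meas, of \<xi>] measurable_cong_sets[OF hs(1) refl, of "borel :: 'x measure"] by simp
    have e: "\<forall>B \<in> sets borel. emeasure (orbit_measure haar act \<xi>) B = emeasure haar {h. act \<xi> h \<in> B}"
      unfolding om using emeasure_distr[OF psih] hs by (simp add: vimage_def)
    have inv: "\<forall>\<zeta> \<in> orbit act \<xi>. orbit_measure haar act \<zeta> = orbit_measure haar act \<xi>"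
      unfolding orbit_def using orbit_measure_inv[OF haar act act_meas] by auto
    show "sets (orbit_measure haar act \<xi>) = sets borel \<and>
        (\<forall>B \<in> sets borel. emeasure (orbit_measure haar act \<xi>) B = emeasure haar {h. act \<xi> h \<in> B}) \<and>
        sigma_finite_measure (orbit_measure haar act \<xi>) \<and>
        UNIV - orbit act \<xi> \<in> null_sets (orbit_measure haar act \<xi>) \<and>
        (\<forall>\<zeta> \<in> orbit act \<xi>. orbit_measure haar act \<zeta> = orbit_measure haar act \<xi>)"
      using part_a[OF lc haar act act_meas stab] e inv om by simp
  qed
  show ?thesis
  proof (rule conjI)
    show "\<forall>\<xi>. compact (stabilizer act \<xi>) \<longrightarrow>
        sets (orbit_measure haar act \<xi>) = sets borel \<and>
        (\<forall>B \<in> sets borel. emeasure (orbit_measure haar act \<xi>) B = emeasure haar {h. act \<xi> h \<in> B}) \<and>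
        sigma_finite_measure (orbit_measure haar act \<xi>) \<and>
        UNIV - orbit act \<xi> \<in> null_sets (orbit_measure haar act \<xi>) \<and>
        (\<forall>\<zeta> \<in> orbit act \<xi>. orbit_measure haar act \<zeta> = orbit_measure haar act \<xi>)"
      using A by blast
  next
    show "(\<forall>\<xi>. compact (stabilizer act \<xi>)) \<longrightarrow> (\<forall>\<phi> :: 'x \<Rightarrow> real.
          \<phi> \<in> borel_measurable borel \<and> (\<forall>\<xi>. 0 \<le> \<phi> \<xi>) \<and> integrable lam \<phi> \<and>
          (AE \<xi> in lam. 0 < (\<integral>\<^sup>+ h. ennreal (\<phi> (act \<xi> h)) \<partial>haar) \<and>
                         (\<integral>\<^sup>+ h. ennreal (\<phi> (act \<xi> h)) \<partial>haar) \<le> 1)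
          \<longrightarrow>
          (let \<mu> = measure_of UNIV (sets borel)
                     (\<lambda>B. \<integral>\<^sup>+ \<xi>. ennreal (\<phi> \<xi>) * (\<integral>\<^sup>+ h. indicator B (act \<xi> h) \<partial>haar) \<partial>lam)
           in sets \<mu> = sets borel \<and>
              (\<forall>B \<in> sets borel.
                 (\<lambda>Orb. emeasure (orbit_measure_of haar act Orb) B)
                    \<in> borel_measurable (quotient_measure act lam \<phi>) \<and>
                 (\<lambda>\<xi>. ennreal (\<phi> \<xi>) * (\<integral>\<^sup>+ h. indicator B (act \<xi> h) \<partial>haar))
                    \<in> borel_measurable lam \<and>
                 emeasure \<mu> B = (\<integral>\<^sup>+ Orb. emeasure (orbit_measure_of haar act Orb) B
                                     \<partial>(quotient_measure act lam \<phi>)) \<and>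
                 emeasure \<mu> B = (\<integral>\<^sup>+ \<xi>. ennreal (\<phi> \<xi>) * (\<integral>\<^sup>+ h. indicator B (act \<xi> h) \<partial>haar) \<partial>lam))))"
    proof (intro allI impI)
    fix \<phi> :: "'x \<Rightarrow> real"
    assume asm: "\<phi> \<in> borel_measurable borel \<and> (\<forall>\<xi>. 0 \<le> \<phi> \<xi>) \<and> integrable lam \<phi> \<and>
          (AE \<xi> in lam. 0 < (\<integral>\<^sup>+ h. ennreal (\<phi> (act \<xi> h)) \<partial>haar) \<and>
                         (\<integral>\<^sup>+ h. ennreal (\<phi> (act \<xi> h)) \<partial>haar) \<le> 1)"
    then have phim: "\<phi> \<in> borel_measurable borel" by blast
    note pb = part_b[OF lc haar act act_meas lam_sets phim]
    show "let \<mu> = measure_of UNIV (sets borel)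
                     (\<lambda>B. \<integral>\<^sup>+ \<xi>. ennreal (\<phi> \<xi>) * (\<integral>\<^sup>+ h. indicator B (act \<xi> h) \<partial>haar) \<partial>lam)
           in sets \<mu> = sets borel \<and>
              (\<forall>B \<in> sets borel.
                 (\<lambda>Orb. emeasure (orbit_measure_of haar act Orb) B)
                    \<in> borel_measurable (quotient_measure act lam \<phi>) \<and>
                 (\<lambda>\<xi>. ennreal (\<phi> \<xi>) * (\<integral>\<^sup>+ h. indicator B (act \<xi> h) \<partial>haar))
                    \<in> borel_measurable lam \<and>
                 emeasure \<mu> B = (\<integral>\<^sup>+ Orb. emeasure (orbit_measure_of haar act Orb) B
                                     \<partial>(quotient_measure act lam \<phi>)) \<and>
                 emeasure \<mu> B = (\<integral>\<^sup>+ \<xi>. ennreal (\<phi> \<xi>) * (\<integral>\<^sup>+ h. indicator B (act \<xi> h) \<partial>haar) \<partial>lam))"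
      unfolding Let_def using pb(1) pb(2) by blast
    qed
  qed
qed

end
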